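(* There exist a set $\Omega$ with exactly three elements, a distribution $m\in\Delta(\Omega)$ and $\lambda\in[0,1)$ defining an irreducible Markov chain with transitions $\pi(\omega\mid\omega)=(1-\lambda)m(\omega)+\lambda$ and $\pi(\omega'\mid\omega)=(1-\lambda)m(\omega')$ for $\omega'\neq\omega$, a payoff function $r:\Omega\to\mathbb{R}$, a discount factor $\delta\in(0,1)$ and an initial belief $p_1\in\Delta(\Omega)$ such that the greedy strategy $\sigma_*$ is not optimal at $p_1$ in the decision problem described in the context.
   Context: Identify each $\omega\in\Omega$ with a unit vector of $\mathbb{R}^\Omega$ and $\Delta(\Omega)$ with the unit simplex. For $p\in\Delta(\Omega)$ let $\langle p,r\rangle=\sum_\omega p(\omega)r(\omega)$; $I=\{p:\langle p,r\rangle\ge0\}$, $J=\Delta(\Omega)\setminus I$. Let $M$ be the transition matrix and $\phi(q)=qM$ (for the chain above, $\phi(p)=m+\lambda(p-m)$). $\mathcal{S}(p)$ is the set of Borel probability measures on $\Delta(\Omega)$ with mean $p$, $\mu_p$ the Dirac mass at $p$. Decision problem from $p_1$: at each stage $n$, at belief $p_n$, the advisor chooses $\mu\in\mathcal{S}(p_n)$ (possibly depending on the past), a posterior $q_n\sim\mu$ is drawn, the stage payoff is $\mathbf{1}_{\{q_n\in I\}}$, and $p_{n+1}=\phi(q_n)$. A strategy's payoff is $\mathbb{E}[(1-\delta)\sum_{n\ge1}\delta^{n-1}\mathbf{1}_{\{q_n\in I\}}]$; $V_\delta(p_1)$ is the maximal payoff; a strategy is optimal at $p_1$ if it achieves it.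 The greedy strategy $\sigma_*$: at $p\in I$ choose $\mu_p$; at $p\in J$ choose a two-point splitting $p=a_Iq_I+a_Jq_J$ maximizing $a_I$ subject to $q_I\in I$, $q_J\in\Delta(\Omega)$, $a_I+a_J=1$, $a_I,a_J\ge0$. *)

theory Defs
  imports "HOL-Probability.Probability"
begin

text \<open>States: the index type 'n (finite); beliefs are vectors in real^'n.
  Each state omega is identified with the unit vector axis omega 1.\<close>

definition prob_simplex :: "(real^'n::finite) set" where
  "prob_simplex = {p. (\<forall>i. 0 \<le> p $ i) \<and> (\<Sum>i\<in>UNIV. p $ i) = 1}"

definition trans_prob :: "real^'n::finite \<Rightarrow> real \<Rightarrow> 'n \<Rightarrow> 'n \<Rightarrow> real" where
  "trans_prob m l w w' = (1 - l) * m $ w' + (if w' = w then l else 0)"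

definition irreducible_chain :: "('n::finite \<Rightarrow> 'n \<Rightarrow> real) \<Rightarrow> bool" where
  "irreducible_chain P \<longleftrightarrow> (\<forall>w w'. (\<lambda>a b. 0 < P a b)\<^sup>*\<^sup>* w w')"

definition phi :: "real^'n::finite \<Rightarrow> real \<Rightarrow> real^'n \<Rightarrow> real^'n" where
  "phi m l q = (\<chi> w'. \<Sum>w\<in>UNIV. q $ w * trans_prob m l w w')"

definition pair :: "real^'n::finite \<Rightarrow> real^'n \<Rightarrow> real" where
  "pair p r = (\<Sum>w\<in>UNIV. p $ w * r $ w)"

definition Iset :: "real^'n::finite \<Rightarrow> (real^'n) set" where
  "Iset r = {p \<in> prob_simplex. 0 \<le> pair p r}"

definition Jset :: "real^'n::finite \<Rightarrow> (real^'n) set" where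
  "Jset r = prob_simplex - Iset r"

text \<open>S(p): Borel probability measures on the prob_simplex with mean p (represented as Borel
  probability measures on real^'n concentrated on the prob_simplex).\<close>
definition splittings :: "real^'n::finite \<Rightarrow> (real^'n) measure set" where
  "splittings p = {\<mu>. sets \<mu> = sets borel \<and> prob_space \<mu> \<and> (AE q in \<mu>. q \<in> prob_simplex)
      \<and> integrable \<mu> (\<lambda>q. q) \<and> integral\<^sup>L \<mu> (\<lambda>q. q) = p}"

text \<open>A strategy maps the history of past posteriors [q_1,...,q_(n-1)] to the measure chosen at
  stage n. The current belief after a history is p_1 (empty history) or phi(q_(n-1)).\<close>
definition belief :: "real^'n::finite \<Rightarrow> real \<Rightarrow> real^'n \<Rightarrow> (real^'n) list \<Rightarrow> real^'n" where
  "belief m l p1 h = (if h = [] then p1 else phi m l (last h))"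

definition is_strategy ::
  "real^'n::finite \<Rightarrow> real \<Rightarrow> real^'n \<Rightarrow> ((real^'n) list \<Rightarrow> (real^'n) measure) \<Rightarrow> bool" where
  "is_strategy m l p1 \<sigma> \<longleftrightarrow> (\<forall>h. set h \<subseteq> prob_simplex \<longrightarrow> \<sigma> h \<in> splittings (belief m l p1 h))"

text \<open>Expected discounted payoff of the first N stages, from history h onwards
  (normalised as in the payoff (1-delta) sum delta^(n-1) 1_{q_n in I}).\<close>
fun trunc_payoff ::
  "real^'n::finite \<Rightarrow> real \<Rightarrow> nat \<Rightarrow> ((real^'n) list \<Rightarrow> (real^'n) measure) \<Rightarrow> (real^'n) list \<Rightarrow> ennreal" where
  "trunc_payoff r d 0 \<sigma> h = 0"
| "trunc_payoff r d (Suc N) \<sigma> h =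
     (\<integral>\<^sup>+ q. ennreal (1 - d) * indicator (Iset r) q + ennreal d * trunc_payoff r d N \<sigma> (h @ [q]) \<partial>(\<sigma> h))"

text \<open>Payoff of a strategy: the expectation of the infinite discounted sum, i.e. the limit
  (supremum) of the expected truncated sums (monotone convergence).\<close>
definition strat_payoff ::
  "real^'n::finite \<Rightarrow> real \<Rightarrow> ((real^'n) list \<Rightarrow> (real^'n) measure) \<Rightarrow> ennreal" where
  "strat_payoff r d \<sigma> = (SUP N. trunc_payoff r d N \<sigma> [])"

definition value_fn :: "real^'n::finite \<Rightarrow> real \<Rightarrow> real^'n \<Rightarrow> real \<Rightarrow> real^'n \<Rightarrow> ennreal" where
  "value_fn m l r d p1 = (SUP \<sigma> \<in> {\<sigma>. is_strategy m l p1 \<sigma>}. strat_payoff r d \<sigma>)"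

definition optimal ::
  "real^'n::finite \<Rightarrow> real \<Rightarrow> real^'n \<Rightarrow> real \<Rightarrow> real^'n \<Rightarrow> ((real^'n) list \<Rightarrow> (real^'n) measure) \<Rightarrow> bool" where
  "optimal m l r d p1 \<sigma> \<longleftrightarrow> is_strategy m l p1 \<sigma> \<and> strat_payoff r d \<sigma> = value_fn m l r d p1"

definition feasible_split :: "real^'n::finite \<Rightarrow> real^'n \<Rightarrow> real \<Rightarrow> real^'n \<Rightarrow> real \<Rightarrow> real^'n \<Rightarrow> bool" where
  "feasible_split r p aI qI aJ qJ \<longleftrightarrow> p = aI *\<^sub>R qI + aJ *\<^sub>R qJ \<and> qI \<in> Iset r \<and> qJ \<in> prob_simplex
      \<and> aI + aJ = 1 \<and> 0 \<le> aI \<and> 0 \<le> aJ"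

definition greedy_choice :: "real^'n::finite \<Rightarrow> real^'n \<Rightarrow> (real^'n) measure \<Rightarrow> bool" where
  "greedy_choice r p \<mu> \<longleftrightarrow>
     (p \<in> Iset r \<longrightarrow> \<mu> = return borel p) \<and>
     (p \<in> Jset r \<longrightarrow> (\<exists>aI qI aJ qJ. feasible_split r p aI qI aJ qJ
        \<and> (\<forall>aI' qI' aJ' qJ'. feasible_split r p aI' qI' aJ' qJ' \<longrightarrow> aI' \<le> aI)
        \<and> sets \<mu> = sets borel
        \<and> (\<forall>A\<in>sets borel. emeasure \<mu> A = ennreal aI * indicator A qI + ennreal aJ * indicator A qJ)))"

definition is_greedy ::
  "real^'n::finite \<Rightarrow> real \<Rightarrow> real^'n \<Rightarrow> real^'n \<Rightarrow> ((real^'n) list \<Rightarrow> (real^'n) measure) \<Rightarrow> bool" where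
  "is_greedy m l r p1 \<sigma> \<longleftrightarrow> (\<forall>h. set h \<subseteq> prob_simplex \<longrightarrow> greedy_choice r (belief m l p1 h) (\<sigma> h))"

end

theory Submission
  imports Defs
begin


definition TP :: "(real^3) measure \<Rightarrow> real \<Rightarrow> real^3 \<Rightarrow> real \<Rightarrow> real^3 \<Rightarrow> bool" where
  "TP \<mu> a x b y \<longleftrightarrow> sets \<mu> = sets borel \<and> 0 \<le> a \<and> 0 \<le> b \<and>
     (\<forall>A\<in>sets borel. emeasure \<mu> A = ennreal a * indicator A x + ennreal b * indicator A y)"

lemma TP_AE:
  assumes "TP \<mu> a x b y"
  shows "AE q in \<mu>. q \<in> {x, y}"
proof (rule AE_I')
  have s: "UNIV - {x,y} \<in> sets borel" by auto
  show "UNIV - {x, y} \<in> null_sets \<mu>"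
    using assms s unfolding TP_def by (auto simp: null_sets_def)
  show "{q \<in> space \<mu>. q \<notin> {x, y}} \<subseteq> UNIV - {x, y}" by auto
qed

lemma TP_nn:
  assumes "TP \<mu> a x b y"
  shows "(\<integral>\<^sup>+ q. g q \<partial>\<mu>) = ennreal a * g x + ennreal b * g y"
proof (cases "x = y")
  case True
  have "(\<integral>\<^sup>+ q. g q \<partial>\<mu>) = (\<integral>\<^sup>+ q. g x * indicator {x} q \<partial>\<mu>)"
    using TP_AE[OF assms] True by (intro nn_integral_cong_AE) (auto elim!: eventually_mono)
  also have "\<dots> = g x * emeasure \<mu> {x}"
    using assms by (intro nn_integral_cmult_indicator) (auto simp: TP_def)
  also have "\<dots> = ennreal a * g x + ennreal b * g y"
    using assms True by (auto simp: TP_def algebra_simps)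
  finally show ?thesis .
next
  case False
  have m: "sets \<mu> = sets borel" using assms by (auto simp: TP_def)
  have "(\<integral>\<^sup>+ q. g q \<partial>\<mu>) = (\<integral>\<^sup>+ q. g x * indicator {x} q + g y * indicator {y} q \<partial>\<mu>)"
    using TP_AE[OF assms] False by (intro nn_integral_cong_AE) (auto elim!: eventually_mono)
  also have "\<dots> = (\<integral>\<^sup>+ q. g x * indicator {x} q \<partial>\<mu>) + (\<integral>\<^sup>+ q. g y * indicator {y} q \<partial>\<mu>)"
    by (rule nn_integral_add) (auto simp: measurable_cong_sets[OF m refl])
  also have "\<dots> = g x * emeasure \<mu> {x} + g y * emeasure \<mu> {y}"
    using m by (simp add: nn_integral_cmult_indicator)
  also have "\<dots> = ennreal a * g x + ennreal b * g y"
    using assms False by (auto simp: TP_def algebra_simps)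
  finally show ?thesis .
qed



definition tp :: "real \<Rightarrow> real^3 \<Rightarrow> real^3 \<Rightarrow> (real^3) measure" where
  "tp a x y = distr (measure_pmf (bernoulli_pmf a)) borel (\<lambda>b. if b then x else y)"

lemma tp_sets: "sets (tp a x y) = sets borel" by (simp add: tp_def)

lemma tp_TP:
  assumes "0 \<le> a" "a \<le> 1"
  shows "TP (tp a x y) a x (1 - a) y"
  unfolding TP_def
proof (intro conjI ballI)
  fix A :: "(real^3) set" assume A: "A \<in> sets borel"
  have "emeasure (tp a x y) A = emeasure (measure_pmf (bernoulli_pmf a)) ((\<lambda>b. if b then x else y) -` A)"
    unfolding tp_def using A by (subst emeasure_distr) auto
  also have "(\<lambda>b. if b then x else y) -` A = (if x \<in> A then {True} else {}) \<union> (if y \<in> A then {False} else {})"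
    by (auto split: if_splits)
  also have "emeasure (measure_pmf (bernoulli_pmf a)) \<dots> = ennreal a * indicator A x + ennreal (1 - a) * indicator A y"
    using assms by (subst emeasure_measure_pmf_finite) (auto simp: indicator_def ennreal_plus)
  finally show "emeasure (tp a x y) A = ennreal a * indicator A x + ennreal (1 - a) * indicator A y" .
qed (use assms in \<open>auto simp: tp_def\<close>)

lemma tp_integrable: "integrable (tp a x y) (\<lambda>q. q)"
  unfolding tp_def
  by (subst integrable_distr_eq) (auto intro!: integrable_measure_pmf_finite)

lemma tp_integral:
  assumes "0 \<le> a" "a \<le> 1"
  shows "integral\<^sup>L (tp a x y) (\<lambda>q. q) = a *\<^sub>R x + (1 - a) *\<^sub>R y"
proof -
  have "integral\<^sup>L (tp a x y) (\<lambda>q. q) = integral\<^sup>L (measure_pmf (bernoulli_pmf a)) (\<lambda>b. if b then x else y)"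
    unfolding tp_def by (subst integral_distr) auto
  also have "\<dots> = (\<Sum>b\<in>UNIV. pmf (bernoulli_pmf a) b *\<^sub>R (if b then x else y))"
    by (rule integral_measure_pmf) auto
  also have "\<dots> = a *\<^sub>R x + (1 - a) *\<^sub>R y"
    using assms by (simp add: UNIV_bool)
  finally show ?thesis .
qed

lemma TP_prob:
  assumes "TP \<mu> a x b y" "a + b = 1"
  shows "prob_space \<mu>"
proof
  have "emeasure \<mu> (space \<mu>) = emeasure \<mu> UNIV"
    using assms by (simp add: TP_def space_borel cong: sets_eq_imp_space_eq)
  also have "\<dots> = ennreal a + ennreal b" using assms by (auto simp: TP_def)
  also have "\<dots> = 1" using assms by (simp add: TP_def flip: ennreal_plus)
  finally show "emeasure \<mu> (space \<mu>) = 1" .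
qed

lemma tp_split:
  assumes "0 \<le> a" "a \<le> 1" "x \<in> prob_simplex" "y \<in> prob_simplex" "a *\<^sub>R x + (1 - a) *\<^sub>R y = p"
  shows "tp a x y \<in> splittings p"
proof -
  have "AE q in tp a x y. q \<in> prob_simplex"
    using TP_AE[OF tp_TP[OF assms(1,2)]] by (rule eventually_mono) (use assms in auto)
  then show ?thesis
    unfolding splittings_def
    using assms tp_integrable tp_integral[OF assms(1,2)] TP_prob[OF tp_TP[OF assms(1,2)]]
    by (auto simp: tp_sets)
qed

lemma return_TP: "TP (return borel p) 1 p 0 p"
  by (auto simp: TP_def)

lemma return_split:
  fixes p :: "real^3"
  assumes "p \<in> prob_simplex"
  shows "return borel p \<in> splittings p"
proof -
  have "return borel p = tp 1 p p"
    by (rule measure_eqI) (auto simp: tp_sets TP_def tp_TP[THEN TP_def[THEN iffD1], THEN conjunct2, THEN conjunct2, THEN conjunct2])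
  then show ?thesis using tp_split[of 1 p p p] assms by simp
qed



definition rr :: "real^3" where "rr = vector [1, -1/1000, -1000]"
definition mm :: "real^3" where "mm = vector [1/100000, 99899/100000, 1/1000]"
definition ll :: real where "ll = 3/5"
definition dd :: real where "dd = 3/20"
definition pp :: "real^3" where "pp = vector [1/10, 0, 9/10]"

lemma simplex_iff: "(p::real^3) \<in> prob_simplex \<longleftrightarrow> 0 \<le> p$1 \<and> 0 \<le> p$2 \<and> 0 \<le> p$3 \<and> p$1 + p$2 + p$3 = 1"
  by (auto simp: prob_simplex_def forall_3 sum_3)

lemma pair_rr: "pair (p::real^3) rr = p$1 - p$2/1000 - 1000 * p$3"
  by (simp add: pair_def sum_3 rr_def)

lemma Iset_iff: "(p::real^3) \<in> Iset rr \<longleftrightarrow> p \<in> prob_simplex \<and> 0 \<le> p$1 - p$2/1000 - 1000 * p$3"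
  by (simp add: Iset_def pair_rr)

lemma Jset_iff: "(p::real^3) \<in> Jset rr \<longleftrightarrow> p \<in> prob_simplex \<and> p$1 - p$2/1000 - 1000 * p$3 < 0"
  by (auto simp: Jset_def Iset_iff)

lemma three_ne: "(1::3) \<noteq> 2" "(1::3) \<noteq> 3" "(2::3) \<noteq> 3" "(2::3) \<noteq> 1" "(3::3) \<noteq> 1" "(3::3) \<noteq> 2"
  by simp_all

lemma phi_comp: "phi m l (q::real^3) $ (i::3) = (1 - l) * m$i * (q$1 + q$2 + q$3) + l * q$i"
proof -
  have "phi m l q $ i = (\<Sum>w\<in>UNIV. q $ w * ((1 - l) * m $ i + (if i = w then l else 0)))"
    by (simp add: phi_def trans_prob_def)
  also have "\<dots> = (1 - l) * m$i * (q$1 + q$2 + q$3) + l * q$i"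
    using exhaust_3[of i] by (auto simp: sum_3 algebra_simps)
  finally show ?thesis .
qed



lemma split_facts:
  assumes fs: "feasible_split rr p aI qI aJ qJ"
  shows "0 \<le> aI * qI$1" "0 \<le> aI * qI$2" "0 \<le> aI * qI$3"
    "0 \<le> aJ * qJ$1" "0 \<le> aJ * qJ$2" "0 \<le> aJ * qJ$3"
    "p$1 = aI * qI$1 + aJ * qJ$1" "p$2 = aI * qI$2 + aJ * qJ$2" "p$3 = aI * qI$3 + aJ * qJ$3"
    "aI = aI * qI$1 + aI * qI$2 + aI * qI$3" "aJ = aJ * qJ$1 + aJ * qJ$2 + aJ * qJ$3"
    "0 \<le> aI * qI$1 - aI * qI$2 / 1000 - 1000 * (aI * qI$3)"
proof -
  have qI: "qI \<in> Iset rr" and qJ: "qJ \<in> prob_simplex" and a: "0 \<le> aI" "0 \<le> aJ"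
    and pe: "p = aI *\<^sub>R qI + aJ *\<^sub>R qJ"
    using fs by (auto simp: feasible_split_def)
  from qI have qI': "0 \<le> qI$1" "0 \<le> qI$2" "0 \<le> qI$3" "qI$1 + qI$2 + qI$3 = 1"
    "0 \<le> qI$1 - qI$2/1000 - 1000 * qI$3"
    by (auto simp: Iset_iff simplex_iff)
  from qJ have qJ': "0 \<le> qJ$1" "0 \<le> qJ$2" "0 \<le> qJ$3" "qJ$1 + qJ$2 + qJ$3 = 1"
    by (auto simp: simplex_iff)
  show "0 \<le> aI * qI$1" "0 \<le> aI * qI$2" "0 \<le> aI * qI$3"
    "0 \<le> aJ * qJ$1" "0 \<le> aJ * qJ$2" "0 \<le> aJ * qJ$3"
    using a qI' qJ' by simp_all
  show "p$1 = aI * qI$1 + aJ * qJ$1" "p$2 = aI * qI$2 + aJ * qJ$2" "p$3 = aI * qI$3 + aJ * qJ$3"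
    using pe by simp_all
  show "aI = aI * qI$1 + aI * qI$2 + aI * qI$3" "aJ = aJ * qJ$1 + aJ * qJ$2 + aJ * qJ$3"
    using qI'(4) qJ'(4) by (metis distrib_left mult.right_neutral)+
  have "0 \<le> aI * (qI$1 - qI$2/1000 - 1000 * qI$3)" using a qI' by simp
  then show "0 \<le> aI * qI$1 - aI * qI$2 / 1000 - 1000 * (aI * qI$3)"
    by (simp add: algebra_simps)
qed

lemma split_bound:
  assumes fs: "feasible_split rr p aI qI aJ qJ"
  shows "aI \<le> 1001 * p$1" "aI \<le> 1001/1000 * p$1 + 999999/1000000 * p$2"
  using split_facts[OF fs] by linarith+

definition gx :: "real^3 \<Rightarrow> real^3" where
  "gx p = (if p$1 \<le> p$2/1000 then vector [p$1, 1000*p$1, 0] else vector [p$1, p$2, (p$1 - p$2/1000)/1000])"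
definition gA :: "real^3 \<Rightarrow> real" where "gA p = gx p $1 + gx p $2 + gx p $3"
definition gqI :: "real^3 \<Rightarrow> real^3" where
  "gqI p = (if 0 < gA p then (1 / gA p) *\<^sub>R gx p else vector [1, 0, 0])"
definition gqJ :: "real^3 \<Rightarrow> real^3" where
  "gqJ p = (1 / (1 - gA p)) *\<^sub>R (p - gx p)"

lemma gx_props:
  assumes "p \<in> Jset rr"
  shows "0 \<le> gx p $1" "0 \<le> gx p $2" "0 \<le> gx p $3"
    "gx p $1 \<le> p$1" "gx p $2 \<le> p$2" "gx p $3 \<le> p$3"
    "gx p $1 - gx p $2 / 1000 - 1000 * gx p $3 = 0"
    "gA p = min (1001 * p$1) (1001/1000 * p$1 + 999999/1000000 * p$2)"
  using assms by (auto simp: gx_def gA_def Jset_iff simplex_iff min_def field_simps)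

lemma gA_lt1:
  assumes "p \<in> Jset rr" shows "gA p < 1" "0 \<le> gA p"
proof -
  have "p$1 + p$2 + p$3 = 1" "p$1 - p$2/1000 - 1000 * p$3 < 0"
    using assms by (auto simp: Jset_iff simplex_iff)
  then show "gA p < 1" "0 \<le> gA p" using gx_props[OF assms] unfolding gA_def by linarith+
qed

lemma g_feasible:
  assumes J: "p \<in> Jset rr"
  shows "feasible_split rr p (gA p) (gqI p) (1 - gA p) (gqJ p)"
proof -
  note g = gx_props[OF J] and a = gA_lt1[OF J]
  have ps: "0 \<le> p$1" "0 \<le> p$2" "0 \<le> p$3" "p$1 + p$2 + p$3 = 1"
    using J by (auto simp: Jset_iff simplex_iff)
  have A1: "1 - gA p \<noteq> 0" using a by simp
  have qI: "gqI p \<in> Iset rr"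
  proof (cases "0 < gA p")
    case True
    have c: "gqI p $ i = gx p $ i / gA p" for i using True by (simp add: gqI_def)
    have s1: "gx p $1 / gA p + gx p $2 / gA p + gx p $3 / gA p = 1"
      using True unfolding gA_def by (simp add: add_divide_distrib[symmetric])
    have s2: "gx p $1 / gA p - gx p $2 / gA p / 1000 - 1000 * (gx p $3 / gA p)
       = (gx p $1 - gx p $2 / 1000 - 1000 * gx p $3) / gA p"
      by (simp add: diff_divide_distrib)
    show ?thesis unfolding Iset_iff simplex_iff c s2 using g True s1 by simp
  next
    case False then show ?thesis by (simp add: gqI_def Iset_iff simplex_iff)
  qed
  have qJ: "gqJ p \<in> prob_simplex"
  proof -
    have c: "gqJ p $ i = (p$i - gx p $ i) / (1 - gA p)" for i by (simp add: gqJ_def)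
    have s1: "(p$1 - gx p $1) / (1 - gA p) + (p$2 - gx p $2) / (1 - gA p) + (p$3 - gx p $3) / (1 - gA p)
        = (p$1 - gx p $1 + (p$2 - gx p $2) + (p$3 - gx p $3)) / (1 - gA p)"
      by (simp add: add_divide_distrib)
    have s3: "p$1 - gx p $1 + (p$2 - gx p $2) + (p$3 - gx p $3) = 1 - gA p"
      using ps unfolding gA_def by linarith
    show ?thesis unfolding simplex_iff c s1 s3 using A1 g a by simp
  qed
  have eq: "p = gA p *\<^sub>R gqI p + (1 - gA p) *\<^sub>R gqJ p"
  proof (cases "0 < gA p")
    case True
    have "p $ i = gA p * (gx p $ i / gA p) + (1 - gA p) * ((p$i - gx p $ i) / (1 - gA p))" for i
      using True A1 by simp
    then show ?thesis using True A1 by (simp add: gqI_def gqJ_def vec_eq_iff)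
  next
    case False
    then have "gA p = 0" using a by simp
    moreover have "gx p = 0" using g \<open>gA p = 0\<close> unfolding gA_def
      by (simp add: vec_eq_iff forall_3)
    ultimately show ?thesis by (simp add: gqJ_def)
  qed
  show ?thesis using qI qJ eq a by (simp add: feasible_split_def)
qed

lemma g_max:
  assumes "p \<in> Jset rr" "feasible_split rr p aI qI aJ qJ"
  shows "aI \<le> gA p"
  using split_bound[OF assms(2)] gx_props(8)[OF assms(1)] by simp



definition gmeas :: "real^3 \<Rightarrow> (real^3) measure" where
  "gmeas p = (if 0 \<le> pair p rr then return borel p else tp (gA p) (gqI p) (gqJ p))"

definition gsig :: "(real^3) list \<Rightarrow> (real^3) measure" where
  "gsig h = gmeas (belief mm ll pp h)"

lemma mm_simplex: "mm \<in> prob_simplex" by (simp add: simplex_iff mm_def)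
lemma pp_simplex: "pp \<in> prob_simplex" by (simp add: simplex_iff pp_def)

lemma phi_simplex:
  assumes "q \<in> prob_simplex" shows "phi mm ll q \<in> prob_simplex"
proof -
  have q: "0 \<le> q$1" "0 \<le> q$2" "0 \<le> q$3" "q$1 + q$2 + q$3 = 1" using assms by (auto simp: simplex_iff)
  have c: "phi mm ll q $ i = (1 - ll) * mm$i + ll * q$i" for i using q(4) by (simp add: phi_comp)
  show ?thesis unfolding simplex_iff c using q by (simp add: mm_def ll_def)
qed

lemma belief_simplex:
  assumes "set h \<subseteq> prob_simplex" shows "belief mm ll pp h \<in> prob_simplex"
proof (cases "h = []")
  case True then show ?thesis by (simp add: belief_def pp_simplex)
next
  case False
  then have "last h \<in> prob_simplex" using assms last_in_set by blast
  then show ?thesis using False by (simp add: belief_def phi_simplex)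
qed

lemma gmeas_greedy:
  assumes "p \<in> prob_simplex" shows "greedy_choice rr p (gmeas p)"
proof (cases "0 \<le> pair p rr")
  case True
  then have "p \<notin> Jset rr" using assms by (simp add: Jset_def Iset_def)
  then show ?thesis using True by (simp add: greedy_choice_def gmeas_def)
next
  case False
  then have J: "p \<in> Jset rr" using assms by (simp add: Jset_def Iset_def)
  have a: "0 \<le> gA p" "gA p \<le> 1" using gA_lt1[OF J] by auto
  have "\<exists>aI qI aJ qJ. feasible_split rr p aI qI aJ qJ
        \<and> (\<forall>aI' qI' aJ' qJ'. feasible_split rr p aI' qI' aJ' qJ' \<longrightarrow> aI' \<le> aI)
        \<and> sets (gmeas p) = sets borel
        \<and> (\<forall>A\<in>sets borel. emeasure (gmeas p) A = ennreal aI * indicator A qI + ennreal aJ * indicator A qJ)"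
    apply (rule exI[of _ "gA p"], rule exI[of _ "gqI p"], rule exI[of _ "1 - gA p"], rule exI[of _ "gqJ p"])
    using g_feasible[OF J] g_max[OF J] tp_TP[OF a, of "gqI p" "gqJ p"] False
    by (auto simp: gmeas_def TP_def)
  then show ?thesis using False by (auto simp: greedy_choice_def Iset_def)
qed

lemma gsig_greedy: "is_greedy mm ll rr pp gsig"
  unfolding is_greedy_def gsig_def using gmeas_greedy belief_simplex by blast



lemma greedy_rep:
  assumes G: "is_greedy mm ll rr pp \<sigma>" and h: "set h \<subseteq> prob_simplex"
  shows "\<exists>a x b y. TP (\<sigma> h) a x b y \<and> a + b = 1 \<and> x \<in> prob_simplex \<and> y \<in> prob_simplex"
proof -
  let ?p = "belief mm ll pp h"
  have p: "?p \<in> prob_simplex" using belief_simplex[OF h] .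
  have gc: "greedy_choice rr ?p (\<sigma> h)" using G h by (simp add: is_greedy_def)
  show ?thesis
  proof (cases "?p \<in> Iset rr")
    case True
    then have "\<sigma> h = return borel ?p" using gc by (simp add: greedy_choice_def)
    then show ?thesis using return_TP[of ?p] p by fastforce
  next
    case False
    then have J: "?p \<in> Jset rr" using p by (simp add: Jset_def)
    then obtain aI qI aJ qJ where fs: "feasible_split rr ?p aI qI aJ qJ"
      and s: "sets (\<sigma> h) = sets borel"
      and e: "\<forall>A\<in>sets borel. emeasure (\<sigma> h) A = ennreal aI * indicator A qI + ennreal aJ * indicator A qJ"
      using gc by (auto simp: greedy_choice_def)
    have "TP (\<sigma> h) aI qI aJ qJ" using fs s e by (simp add: TP_def feasible_split_def)
    then show ?thesis using fs by (auto simp: feasible_split_def Iset_def)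
  qed
qed

lemma ind_le1: "indicator A x \<le> (1::ennreal)" by (simp add: indicator_def)

lemma dd_sum: "ennreal (1 - dd) + ennreal dd = 1"
  by (simp add: dd_def flip: ennreal_plus)

lemma bound1:
  assumes G: "is_greedy mm ll rr pp \<sigma>"
  shows "set h \<subseteq> prob_simplex \<Longrightarrow> trunc_payoff rr dd N \<sigma> h \<le> 1"
proof (induction N arbitrary: h)
  case 0 then show ?case by simp
next
  case (Suc N)
  obtain a x b y where tp: "TP (\<sigma> h) a x b y" "a + b = 1" "x \<in> prob_simplex" "y \<in> prob_simplex"
    using greedy_rep[OF G Suc.prems] by blast
  let ?g = "\<lambda>q. ennreal (1 - dd) * indicator (Iset rr) q + ennreal dd * trunc_payoff rr dd N \<sigma> (h @ [q])"
  have gle: "?g q \<le> 1" if "q \<in> prob_simplex" for q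
  proof -
    have "?g q \<le> ennreal (1 - dd) * 1 + ennreal dd * 1"
      using Suc.IH[of "h @ [q]"] Suc.prems that
      by (intro add_mono mult_left_mono ind_le1) auto
    then show ?thesis using dd_sum by simp
  qed
  have "trunc_payoff rr dd (Suc N) \<sigma> h = ennreal a * ?g x + ennreal b * ?g y"
    using TP_nn[OF tp(1)] by simp
  also have "\<dots> \<le> ennreal a * 1 + ennreal b * 1"
    using gle tp by (intro add_mono mult_left_mono) auto
  also have "\<dots> = 1" using tp TP_def by (simp flip: ennreal_plus)
  finally show ?case .
qed

lemma stageJ:
  assumes G: "is_greedy mm ll rr pp \<sigma>" and h: "set h \<subseteq> prob_simplex"
    and J: "belief mm ll pp h \<in> Jset rr"
  shows "trunc_payoff rr dd (Suc N) \<sigma> h \<le> ennreal ((1 - dd) * (1001 * belief mm ll pp h $ 1) + dd)"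
proof -
  let ?p = "belief mm ll pp h"
  have gc: "greedy_choice rr ?p (\<sigma> h)" using G h by (simp add: is_greedy_def)
  obtain aI qI aJ qJ where fs: "feasible_split rr ?p aI qI aJ qJ"
      and s: "sets (\<sigma> h) = sets borel"
      and e: "\<forall>A\<in>sets borel. emeasure (\<sigma> h) A = ennreal aI * indicator A qI + ennreal aJ * indicator A qJ"
      using gc J by (auto simp: greedy_choice_def)
  have tp: "TP (\<sigma> h) aI qI aJ qJ" using fs s e by (simp add: TP_def feasible_split_def)
  have a: "0 \<le> aI" "0 \<le> aJ" "aI + aJ = 1" and qI: "qI \<in> prob_simplex" and qJ: "qJ \<in> prob_simplex"
    using fs by (auto simp: feasible_split_def Iset_def)
  have qJn: "qJ \<notin> Iset rr"
  proof
    assume "qJ \<in> Iset rr"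
    then have "0 \<le> qJ$1 - qJ$2/1000 - 1000 * qJ$3" by (simp add: Iset_iff)
    then have "0 \<le> aJ * (qJ$1 - qJ$2/1000 - 1000 * qJ$3)" using a by simp
    then have "0 \<le> aJ * qJ$1 - aJ * qJ$2/1000 - 1000 * (aJ * qJ$3)" by (simp add: algebra_simps)
    moreover have "?p$1 - ?p$2/1000 - 1000 * ?p$3 < 0" using J by (simp add: Jset_iff)
    ultimately show False using split_facts[OF fs] by linarith
  qed
  have aIb: "aI \<le> 1001 * ?p $ 1" using split_bound[OF fs] by simp
  let ?g = "\<lambda>q. ennreal (1 - dd) * indicator (Iset rr) q + ennreal dd * trunc_payoff rr dd N \<sigma> (h @ [q])"
  have g1: "?g qI \<le> 1"
  proof -
    have "?g qI \<le> ennreal (1 - dd) * 1 + ennreal dd * 1"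
      using bound1[OF G, of "h @ [qI]" N] h qI
      by (intro add_mono mult_left_mono ind_le1) auto
    then show ?thesis using dd_sum by simp
  qed
  have g2: "?g qJ \<le> ennreal dd"
  proof -
    have "?g qJ = ennreal dd * trunc_payoff rr dd N \<sigma> (h @ [qJ])" using qJn by simp
    also have "\<dots> \<le> ennreal dd * 1"
      using bound1[OF G, of "h @ [qJ]" N] h qJ by (intro mult_left_mono) auto
    finally show ?thesis by simp
  qed
  have "trunc_payoff rr dd (Suc N) \<sigma> h = ennreal aI * ?g qI + ennreal aJ * ?g qJ"
    using TP_nn[OF tp] by simp
  also have "\<dots> \<le> ennreal aI * 1 + ennreal aJ * ennreal dd"
    using g1 g2 by (intro add_mono mult_left_mono) auto
  also have "\<dots> = ennreal (aI + aJ * dd)"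
  proof -
    have "0 \<le> dd" by (simp add: dd_def)
    then show ?thesis using a by (simp add: ennreal_mult' ennreal_plus)
  qed
  also have "\<dots> \<le> ennreal ((1 - dd) * (1001 * ?p $ 1) + dd)"
  proof (rule ennreal_leI)
    have "aI + aJ * dd = aI * (1 - dd) + dd * (aI + aJ)" by (simp add: algebra_simps)
    then have "aI + aJ * dd = aI * (1 - dd) + dd" using a(3) by simp
    also have "\<dots> \<le> (1001 * ?p $ 1) * (1 - dd) + dd"
      using aIb by (intro add_right_mono mult_right_mono) (auto simp: dd_def)
    finally show "aI + aJ * dd \<le> (1 - dd) * (1001 * ?p $ 1) + dd" by (simp add: algebra_simps)
  qed
  finally show ?thesis .
qed



definition CC :: real where "CC = (1 - dd) * (1001 * (2/5 * (1/100000))) + dd"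
definition UU :: real where "UU = 1001/10000 + 8999/10000 * (dd * CC)"

lemma pp_J: "pp \<in> Jset rr" by (simp add: Jset_iff simplex_iff pp_def)

lemma greedy_top:
  assumes G: "is_greedy mm ll rr pp \<sigma>"
  shows "trunc_payoff rr dd N \<sigma> [] \<le> ennreal UU"
proof (cases N)
  case 0 then show ?thesis by simp
next
  case (Suc N')
  have b0: "belief mm ll pp [] = pp" by (simp add: belief_def)
  have gc: "greedy_choice rr pp (\<sigma> [])" using G b0 by (metis is_greedy_def empty_set empty_subsetI)
  obtain aI qI aJ qJ where fs: "feasible_split rr pp aI qI aJ qJ"
      and mx: "\<forall>aI' qI' aJ' qJ'. feasible_split rr pp aI' qI' aJ' qJ' \<longrightarrow> aI' \<le> aI"
      and s: "sets (\<sigma> []) = sets borel"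
      and e: "\<forall>A\<in>sets borel. emeasure (\<sigma> []) A = ennreal aI * indicator A qI + ennreal aJ * indicator A qJ"
    using gc pp_J by (auto simp: greedy_choice_def)
  have tp: "TP (\<sigma> []) aI qI aJ qJ" using fs s e by (simp add: TP_def feasible_split_def)
  have a: "0 \<le> aI" "0 \<le> aJ" "aI + aJ = 1" and qI: "qI \<in> prob_simplex" and qJ: "qJ \<in> prob_simplex"
    using fs by (auto simp: feasible_split_def Iset_def)
  have gApp: "gA pp = 1001/10000" using gx_props(8)[OF pp_J] by (simp add: pp_def)
  have "gA pp \<le> aI" using mx g_feasible[OF pp_J] by blast
  moreover have "aI \<le> 1001/10000" using split_bound(2)[OF fs] by (simp add: pp_def)
  ultimately have aIv: "aI = 1001/10000" using gApp by simp
  then have aJv: "aJ = 8999/10000" using a by simp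
  have pc: "pp$1 = 1/10" "pp$2 = 0" "pp$3 = 9/10" by (simp_all add: pp_def)
  have "aJ * qJ$1 = 0" "aJ * qJ$2 = 0"
    using split_facts[OF fs] aIv pc by linarith+
  then have qJ12: "qJ$1 = 0" "qJ$2 = 0" using aJv by simp_all
  then have qJ3: "qJ$3 = 1" using qJ by (simp add: simplex_iff)
  have phc: "phi mm ll qJ $ i = (1 - ll) * mm$i + ll * qJ$i" for i
    using qJ by (simp add: phi_comp simplex_iff)
  have ph1: "phi mm ll qJ $ 1 = 2/5 * (1/100000)" using phc[of 1] qJ12 by (simp add: mm_def ll_def)
  have phJ: "phi mm ll qJ \<in> Jset rr"
    unfolding Jset_iff using phi_simplex[OF qJ] phc[of 1] phc[of 2] phc[of 3] qJ12 qJ3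
    by (simp add: mm_def ll_def)
  have qJn: "qJ \<notin> Iset rr" using qJ12 qJ3 by (simp add: Iset_iff)
  have bq: "belief mm ll pp [qJ] = phi mm ll qJ" by (simp add: belief_def)
  have T: "trunc_payoff rr dd M \<sigma> [qJ] \<le> ennreal CC" for M
  proof (cases M)
    case 0 then show ?thesis by simp
  next
    case (Suc M')
    show ?thesis using stageJ[OF G, of "[qJ]" M'] qJ bq phJ ph1 Suc by (simp add: CC_def)
  qed
  let ?g = "\<lambda>q. ennreal (1 - dd) * indicator (Iset rr) q + ennreal dd * trunc_payoff rr dd N' \<sigma> ([] @ [q])"
  have g1: "?g qI \<le> 1"
  proof -
    have "?g qI \<le> ennreal (1 - dd) * 1 + ennreal dd * 1"
      using bound1[OF G, of "[qI]" N'] qI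
      by (intro add_mono mult_left_mono ind_le1) auto
    then show ?thesis using dd_sum by simp
  qed
  have g2: "?g qJ \<le> ennreal dd * ennreal CC"
    using qJn T[of N'] by (simp add: mult_left_mono)
  have "trunc_payoff rr dd N \<sigma> [] = ennreal aI * ?g qI + ennreal aJ * ?g qJ"
    using TP_nn[OF tp] Suc by simp
  also have "\<dots> \<le> ennreal aI * 1 + ennreal aJ * (ennreal dd * ennreal CC)"
    using g1 g2 by (intro add_mono mult_left_mono) auto
  also have "\<dots> = ennreal UU"
  proof -
    have nn: "0 \<le> dd" "0 \<le> CC" by (auto simp: dd_def CC_def)
    have e1: "ennreal aJ * (ennreal dd * ennreal CC) = ennreal (aJ * (dd * CC))"
      using nn a by (simp add: ennreal_mult)
    have e2: "ennreal aI + ennreal (aJ * (dd * CC)) = ennreal (aI + aJ * (dd * CC))"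
      using nn a by (simp add: ennreal_plus)
    have e3: "UU = aI + aJ * (dd * CC)" by (simp add: UU_def aIv aJv)
    show ?thesis using e1 e2 e3 by simp
  qed
  finally show ?thesis .
qed

lemma greedy_payoff:
  assumes G: "is_greedy mm ll rr pp \<sigma>"
  shows "strat_payoff rr dd \<sigma> \<le> ennreal UU"
  unfolding strat_payoff_def using greedy_top[OF G] by (simp add: SUP_least)



definition e1v :: "real^3" where "e1v = vector [1, 0, 0]"
definition e3v :: "real^3" where "e3v = vector [0, 0, 1]"
definition qa :: "real^3" where "qa = vector [1/1000, 0, 999/1000]"
definition qb :: "real^3" where "qb = vector [151/100050, 99899/100050, 0]"

definition aa :: real where "aa = 11/111"
definition cc :: real where "cc = 2001/5000"

definition alt :: "(real^3) list \<Rightarrow> (real^3) measure" where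
  "alt h = (if h = [] then tp aa e1v qa else if h = [qa] then tp cc qb e3v
            else return borel (belief mm ll pp h))"

lemma phi_qa: "phi mm ll qa = vector [151/250000, 99899/250000, 2999/5000]"
  by (simp add: vec_eq_iff forall_3 phi_comp qa_def mm_def ll_def)

lemma phi_e1: "phi mm ll e1v = vector [3/5 + 2/5 * (1/100000), 2/5 * (99899/100000), 2/5 * (1/1000)]"
  by (simp add: vec_eq_iff forall_3 phi_comp e1v_def mm_def ll_def)

lemma vecs_simplex: "e1v \<in> prob_simplex" "e3v \<in> prob_simplex" "qa \<in> prob_simplex" "qb \<in> prob_simplex"
  by (simp_all add: simplex_iff e1v_def e3v_def qa_def qb_def)

lemma vecs_I: "e1v \<in> Iset rr" "qb \<in> Iset rr" "phi mm ll e1v \<in> Iset rr" "qa \<notin> Iset rr" "e3v \<notin> Iset rr"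
  apply (simp_all only: Iset_iff simplex_iff phi_e1)
  apply (simp_all add: e1v_def e3v_def qa_def qb_def)
  done

lemma e1_ne_qa: "e1v \<noteq> qa"
proof
  assume "e1v = qa" then have "e1v $ 1 = qa $ 1" by simp
  then show False by (simp add: e1v_def qa_def)
qed

lemma split1: "aa *\<^sub>R e1v + (1 - aa) *\<^sub>R qa = pp"
  by (simp add: vec_eq_iff forall_3 e1v_def qa_def pp_def aa_def)

lemma split2: "cc *\<^sub>R qb + (1 - cc) *\<^sub>R e3v = phi mm ll qa"
  by (simp add: vec_eq_iff forall_3 qb_def e3v_def phi_qa cc_def)

lemma alt_strategy: "is_strategy mm ll pp alt"
  unfolding is_strategy_def
proof (intro allI impI)
  fix h :: "(real^3) list" assume h: "set h \<subseteq> prob_simplex"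
  show "alt h \<in> splittings (belief mm ll pp h)"
  proof (cases "h = []")
    case True
    then show ?thesis using tp_split[OF _ _ vecs_simplex(1,3) split1]
      by (simp add: alt_def belief_def aa_def)
  next
    case False
    show ?thesis
    proof (cases "h = [qa]")
      case True
      then show ?thesis using tp_split[OF _ _ vecs_simplex(4,2) split2]
        by (simp add: alt_def belief_def cc_def)
    next
      case False
      then show ?thesis using \<open>h \<noteq> []\<close> return_split[OF belief_simplex[OF h]]
        by (simp add: alt_def)
    qed
  qed
qed

definition LL :: real where
  "LL = aa * ((1 - dd) + dd * (1 - dd)) + (1 - aa) * (dd * (cc * (1 - dd)))"

lemma comb:
  fixes a c d :: real
  assumes "0 \<le> a" "a \<le> 1" "0 \<le> c" "0 \<le> d" "d \<le> 1"
  shows "ennreal a * (ennreal (1 - d) * 1 + ennreal d * ennreal (1 - d))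
    + ennreal (1 - a) * (ennreal (1 - d) * 0 + ennreal d * (ennreal c * ennreal (1 - d)))
    = ennreal (a * ((1 - d) + d * (1 - d)) + (1 - a) * (d * (c * (1 - d))))"
  using assms by (simp add: ennreal_mult ennreal_plus)

lemma alt_trunc: "trunc_payoff rr dd 2 alt [] = ennreal LL"
proof -
  have nn: "0 \<le> dd" "dd \<le> 1" "0 \<le> aa" "aa \<le> 1" "0 \<le> cc" "cc \<le> 1" by (auto simp: dd_def aa_def cc_def)
  have a1: "alt [e1v] = return borel (phi mm ll e1v)"
    using e1_ne_qa by (simp add: alt_def belief_def)
  have t1: "trunc_payoff rr dd 1 alt [e1v] = ennreal (1 - dd)"
    using TP_nn[OF return_TP[of "phi mm ll e1v"]] vecs_I(3) a1 by simp
  have t2: "trunc_payoff rr dd 1 alt [qa] = ennreal cc * ennreal (1 - dd)"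
    using TP_nn[OF tp_TP[of cc qb e3v]] vecs_I(2,5) nn
    by (simp add: alt_def)
  have "trunc_payoff rr dd 2 alt [] =
      ennreal aa * (ennreal (1 - dd) * 1 + ennreal dd * trunc_payoff rr dd 1 alt [e1v])
    + ennreal (1 - aa) * (ennreal (1 - dd) * 0 + ennreal dd * trunc_payoff rr dd 1 alt [qa])"
    using TP_nn[OF tp_TP[of aa e1v qa]] vecs_I(1,4) nn
    by (simp add: alt_def numeral_2_eq_2 del: trunc_payoff.simps(2))
      (simp add: alt_def)
  also have "\<dots> = ennreal LL"
    unfolding t1 t2 LL_def using nn by (intro comb) auto
  finally show ?thesis .
qed



lemma UU_LL: "UU < LL"
  by (simp add: UU_def LL_def CC_def dd_def aa_def cc_def)

lemma irred: "irreducible_chain (trans_prob mm ll)"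
  unfolding irreducible_chain_def
proof (intro allI)
  fix w w' :: 3
  have "0 < mm $ w'" using exhaust_3[of w'] by (auto simp: mm_def)
  then have "0 < trans_prob mm ll w w'" by (auto simp: trans_prob_def ll_def)
  then show "(\<lambda>a b. 0 < trans_prob mm ll a b)\<^sup>*\<^sup>* w w'" by auto
qed

theorem proposition1:
  shows "\<exists>(m::real^3) (l::real) (r::real^3) (d::real) (p1::real^3).
     m \<in> prob_simplex \<and> 0 \<le> l \<and> l < 1 \<and> irreducible_chain (trans_prob m l)
     \<and> 0 < d \<and> d < 1 \<and> p1 \<in> prob_simplex
     \<and> (\<exists>\<sigma>. is_greedy m l r p1 \<sigma>)
     \<and> (\<forall>\<sigma>. is_greedy m l r p1 \<sigma> \<longrightarrow> \<not> optimal m l r d p1 \<sigma>)"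
proof (rule exI[of _ mm], rule exI[of _ ll], rule exI[of _ rr], rule exI[of _ dd], rule exI[of _ pp], intro conjI)
  show "mm \<in> prob_simplex" by (rule mm_simplex)
  show "0 \<le> ll" "ll < 1" "0 < dd" "dd < 1" by (simp_all add: ll_def dd_def)
  show "irreducible_chain (trans_prob mm ll)" by (rule irred)
  show "pp \<in> prob_simplex" by (rule pp_simplex)
  show "\<exists>\<sigma>. is_greedy mm ll rr pp \<sigma>" using gsig_greedy by blast
  show "\<forall>\<sigma>. is_greedy mm ll rr pp \<sigma> \<longrightarrow> \<not> optimal mm ll rr dd pp \<sigma>"
  proof (intro allI impI notI)
    fix \<sigma> assume G: "is_greedy mm ll rr pp \<sigma>" and O: "optimal mm ll rr dd pp \<sigma>"
    have "ennreal LL = trunc_payoff rr dd 2 alt []" by (rule alt_trunc[symmetric])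
    also have "\<dots> \<le> strat_payoff rr dd alt" unfolding strat_payoff_def by (rule SUP_upper) simp
    also have "\<dots> \<le> value_fn mm ll rr dd pp" unfolding value_fn_def
      by (rule SUP_upper) (simp add: alt_strategy)
    also have "\<dots> = strat_payoff rr dd \<sigma>" using O by (simp add: optimal_def)
    also have "\<dots> \<le> ennreal UU" by (rule greedy_payoff[OF G])
    finally have "ennreal LL \<le> ennreal UU" .
    then have "LL \<le> UU" by (simp add: ennreal_le_iff UU_def CC_def dd_def)
    then show False using UU_LL by simp
  qed
qed


end
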